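(* Let $m\ge1$ and $g_1,g_2\in\Gamma_{2m}(2)$. Suppose there exist $Z_1\in g_1\cdot iC_n$, $Z_2\in g_2\cdot iC_n$ and $\gamma\in\Gamma(4m)$ with $\gamma Z_1=Z_2$. Then there exists $\alpha\in\Gamma_\ell(2)$ such that $g_2=\gamma g_1\alpha$.
   Context: $\mathbf{Sp}(2n,\mathbb R)$: real matrices $g=\begin{pmatrix}A&B\\C&D\end{pmatrix}$ with ${}^tgJg=J$, $J=\begin{pmatrix}0&I\\-I&0\end{pmatrix}$, acting on $\mathfrak h_n=\{Z\in M_n(\mathbb C):{}^tZ=Z,\mathrm{Im}Z>0\}$ by $gZ=(AZ+B)(CZ+D)^{-1}$. $\Gamma(4m)=\{\gamma\in\mathbf{Sp}(2n,\mathbb Z):\gamma\equiv I\bmod4m\}$; $\Gamma_{2m}(2)=\{\begin{pmatrix}A&B\\C&D\end{pmatrix}\in\mathbf{Sp}(2n,\mathbb Z):A,D\equiv I\bmod2,\ B,C\equiv0\bmod2m\}$; $\Gamma_\ell(2)=\{U\in\mathbf{GL}(n,\mathbb Z):U\equiv I\bmod2\}$ embedded via $U\mapsto\mathrm{diag}(U,{}^tU^{-1})$. $C_n$: positive definite symmetric real $n\times n$ matrices; $iC_n=\{iY:Y\in C_n\}$. *)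

theory Defs
  imports "HOL-Analysis.Analysis"
begin

text \<open>Real 2n x 2n matrices are indexed by the type 'n + 'n (first block Inl, second block Inr).\<close>

type_synonym 'n smat = "real^('n + 'n)^('n + 'n)"

definition blkA :: "'n::finite smat \<Rightarrow> real^'n^'n" where
  "blkA g = (\<chi> i j. g $ Inl i $ Inl j)"
definition blkB :: "'n::finite smat \<Rightarrow> real^'n^'n" where
  "blkB g = (\<chi> i j. g $ Inl i $ Inr j)"
definition blkC :: "'n::finite smat \<Rightarrow> real^'n^'n" where
  "blkC g = (\<chi> i j. g $ Inr i $ Inl j)"
definition blkD :: "'n::finite smat \<Rightarrow> real^'n^'n" where
  "blkD g = (\<chi> i j. g $ Inr i $ Inr j)"

definition blockmat :: "real^'n^'n \<Rightarrow> real^'n^'n \<Rightarrow> real^'n^'n \<Rightarrow> real^'n^'n \<Rightarrow> 'n::finite smat" where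
  "blockmat A B C D = (\<chi> i j. case i of
      Inl a \<Rightarrow> (case j of Inl b \<Rightarrow> A $ a $ b | Inr b \<Rightarrow> B $ a $ b)
    | Inr a \<Rightarrow> (case j of Inl b \<Rightarrow> C $ a $ b | Inr b \<Rightarrow> D $ a $ b))"

definition Jmat :: "'n::finite smat" where
  "Jmat = blockmat 0 (mat 1) (- mat 1) 0"

definition symplectic :: "'n::finite smat \<Rightarrow> bool" where
  "symplectic g \<longleftrightarrow> transpose g ** Jmat ** g = Jmat"

definition int_matrix :: "real^'m^'k \<Rightarrow> bool" where
  "int_matrix M \<longleftrightarrow> (\<forall>i j. M $ i $ j \<in> \<int>)"

definition congr :: "int \<Rightarrow> real \<Rightarrow> real \<Rightarrow> bool" where
  "congr N x y \<longleftrightarrow> (\<exists>k::int. x - y = of_int (N * k))"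

definition congr_mat :: "int \<Rightarrow> real^'m^'k \<Rightarrow> real^'m^'k \<Rightarrow> bool" where
  "congr_mat N M P \<longleftrightarrow> (\<forall>i j. congr N (M $ i $ j) (P $ i $ j))"

definition Sp_Z :: "'n::finite smat set" where
  "Sp_Z = {g. symplectic g \<and> int_matrix g}"

definition Gamma_princ :: "nat \<Rightarrow> 'n::finite smat set" where
  "Gamma_princ N = {g \<in> Sp_Z. congr_mat (int N) g (mat 1)}"

definition Gamma_2m_2 :: "nat \<Rightarrow> 'n::finite smat set" where
  "Gamma_2m_2 m = {g \<in> Sp_Z.
      congr_mat 2 (blkA g) (mat 1) \<and> congr_mat 2 (blkD g) (mat 1) \<and>
      congr_mat (2 * int m) (blkB g) 0 \<and> congr_mat (2 * int m) (blkC g) 0}"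

definition GL_Z :: "(real^'n^'n) set" where
  "GL_Z = {U. int_matrix U \<and> (\<exists>V. int_matrix V \<and> U ** V = mat 1 \<and> V ** U = mat 1)}"

definition Gamma_l_2 :: "(real^'n::finite^'n) set" where
  "Gamma_l_2 = {U \<in> GL_Z. congr_mat 2 U (mat 1)}"

definition embed_GL :: "real^'n^'n \<Rightarrow> 'n::finite smat" where
  "embed_GL U = blockmat U 0 0 (transpose (matrix_inv U))"

definition cmat :: "real^'m^'k \<Rightarrow> complex^'m^'k" where
  "cmat M = (\<chi> i j. complex_of_real (M $ i $ j))"

definition Im_mat :: "complex^'m^'k \<Rightarrow> real^'m^'k" where
  "Im_mat Z = (\<chi> i j. Im (Z $ i $ j))"

definition pos_def :: "real^'n^'n \<Rightarrow> bool" where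
  "pos_def Y \<longleftrightarrow> transpose Y = Y \<and> (\<forall>x. x \<noteq> 0 \<longrightarrow> x \<bullet> (Y *v x) > 0)"

definition Cn :: "(real^'n::finite^'n) set" where
  "Cn = {Y. pos_def Y}"

definition siegel :: "(complex^'n::finite^'n) set" where
  "siegel = {Z. transpose Z = Z \<and> pos_def (Im_mat Z)}"

definition iCn :: "(complex^'n::finite^'n) set" where
  "iCn = {(\<chi> i j. \<i> * (cmat Y $ i $ j)) | Y. Y \<in> Cn}"

definition sp_act :: "'n::finite smat \<Rightarrow> complex^'n^'n \<Rightarrow> complex^'n^'n" where
  "sp_act g Z = (cmat (blkA g) ** Z + cmat (blkB g)) **
                matrix_inv (cmat (blkC g) ** Z + cmat (blkD g))"

end

theory Submission
  imports Defs
begin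


lemma sum_UNIV_Plus: "sum f (UNIV::('a::finite+'b::finite) set) = sum (\<lambda>a. f (Inl a)) UNIV + sum (\<lambda>b. f (Inr b)) UNIV"
  by (subst UNIV_Plus_UNIV[symmetric], subst sum.Plus) (auto simp: o_def)

lemma blk_mult:
  fixes g h :: "'n::finite smat"
  shows "blkA (g ** h) = blkA g ** blkA h + blkB g ** blkC h"
    "blkB (g ** h) = blkA g ** blkB h + blkB g ** blkD h"
    "blkC (g ** h) = blkC g ** blkA h + blkD g ** blkC h"
    "blkD (g ** h) = blkC g ** blkB h + blkD g ** blkD h"
  by (simp_all add: blkA_def blkB_def blkC_def blkD_def matrix_matrix_mult_def vec_eq_iff sum_UNIV_Plus)

lemma blk_transpose:
  fixes g :: "'n::finite smat"
  shows "blkA (transpose g) = transpose (blkA g)" "blkB (transpose g) = transpose (blkC g)"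
    "blkC (transpose g) = transpose (blkB g)" "blkD (transpose g) = transpose (blkD g)"
  by (simp_all add: blkA_def blkB_def blkC_def blkD_def transpose_def vec_eq_iff)

lemma blk_blockmat:
  shows "blkA (blockmat A B C D) = A" "blkB (blockmat A B C D) = B"
    "blkC (blockmat A B C D) = C" "blkD (blockmat A B C D) = D"
  by (simp_all add: blkA_def blkB_def blkC_def blkD_def blockmat_def vec_eq_iff)

lemma blockmat_blk: "blockmat (blkA g) (blkB g) (blkC g) (blkD g) = g"
  by (simp add: blkA_def blkB_def blkC_def blkD_def blockmat_def vec_eq_iff split: sum.split)

lemma blk_uminus:
  fixes g :: "'n::finite smat"
  shows "blkA (- g) = - blkA g" "blkB (- g) = - blkB g" "blkC (- g) = - blkC g" "blkD (- g) = - blkD g"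
  by (simp_all add: blkA_def blkB_def blkC_def blkD_def vec_eq_iff)

lemma blk_mat1:
  shows "blkA (mat 1 :: 'n::finite smat) = mat 1" "blkB (mat 1 :: 'n::finite smat) = 0"
    "blkC (mat 1 :: 'n::finite smat) = 0" "blkD (mat 1 :: 'n::finite smat) = mat 1"
  by (simp_all add: blkA_def blkB_def blkC_def blkD_def vec_eq_iff mat_def)

lemma blk_J:
  shows "blkA (Jmat :: 'n::finite smat) = 0" "blkB (Jmat :: 'n::finite smat) = mat 1"
    "blkC (Jmat :: 'n::finite smat) = - mat 1" "blkD (Jmat :: 'n::finite smat) = 0"
  by (simp_all add: Jmat_def blk_blockmat)

lemma blk_eq: "g = h \<longleftrightarrow> blkA g = blkA h \<and> blkB g = blkB h \<and> blkC g = blkC h \<and> blkD g = blkD h"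
  by (metis blockmat_blk)

lemma matrix_add_rdistrib: "((B + C) ** A) = (B ** A) + (C ** A)"
  by (vector matrix_matrix_mult_def sum.distrib[symmetric] field_simps)
lemma matrix_diff_ldistrib: "((A::'a::ring_1^_^_) ** (B - C)) = (A ** B) - (A ** C)"
  by (vector matrix_matrix_mult_def sum_subtractf[symmetric] field_simps)
lemma matrix_diff_rdistrib: "((B - C) ** (A::'a::ring_1^_^_)) = (B ** A) - (C ** A)"
  by (vector matrix_matrix_mult_def sum_subtractf[symmetric] field_simps)
lemma matrix_neg_left: "(- B) ** (A::'a::ring_1^_^_) = - (B ** A)"
  by (vector matrix_matrix_mult_def sum_negf[symmetric])
lemma matrix_neg_right: "(A::'a::ring_1^_^_) ** (- B) = - (A ** B)"
  by (vector matrix_matrix_mult_def sum_negf[symmetric])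
lemma transpose_add: "transpose (A + B) = transpose A + transpose B"
  by (vector transpose_def)
lemma transpose_diff: "transpose (A - B) = transpose A - (transpose B :: 'a::ab_group_add^_^_)"
  by (vector transpose_def)
lemma transpose_neg: "transpose (- A) = - (transpose A :: 'a::ab_group_add^_^_)"
  by (vector transpose_def)
lemma transpose_zero: "transpose 0 = 0"
  by (vector transpose_def)

lemma symplectic_blocks:
  fixes g :: "'n::finite smat"
  assumes "symplectic g"
  shows "transpose (blkA g) ** blkC g = transpose (blkC g) ** blkA g"
    "transpose (blkA g) ** blkD g - transpose (blkC g) ** blkB g = mat 1"
    "transpose (blkB g) ** blkD g = transpose (blkD g) ** blkB g"
proof -
  have e: "transpose g ** Jmat ** g = Jmat" using assms by (simp add: symplectic_def)
  have a: "blkA (transpose g ** Jmat ** g) = 0" using e by (simp add: blk_J)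
  have b: "blkB (transpose g ** Jmat ** g) = mat 1" using e by (simp add: blk_J)
  have d: "blkD (transpose g ** Jmat ** g) = 0" using e by (simp add: blk_J)
  from a show "transpose (blkA g) ** blkC g = transpose (blkC g) ** blkA g"
    by (simp add: blk_mult blk_transpose blk_J matrix_neg_left matrix_neg_right)
  from b show "transpose (blkA g) ** blkD g - transpose (blkC g) ** blkB g = mat 1"
    by (simp add: blk_mult blk_transpose blk_J matrix_neg_left matrix_neg_right)
  from d show "transpose (blkB g) ** blkD g = transpose (blkD g) ** blkB g"
    by (simp add: blk_mult blk_transpose blk_J matrix_neg_left matrix_neg_right)
qed



definition icm :: "real^'m^'k \<Rightarrow> complex^'m^'k" where
  "icm Y = (\<chi> i j. \<i> * (cmat Y $ i $ j))"

lemma cmat_mult: "cmat (A ** B) = cmat A ** cmat B"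
  by (simp add: cmat_def matrix_matrix_mult_def vec_eq_iff)
lemma cmat_add: "cmat (A + B) = cmat A + cmat B"
  by (simp add: cmat_def vec_eq_iff)
lemma cmat_diff: "cmat (A - B) = cmat A - cmat B"
  by (simp add: cmat_def vec_eq_iff)
lemma cmat_neg: "cmat (- A) = - cmat A"
  by (simp add: cmat_def vec_eq_iff)
lemma cmat_mat1: "cmat (mat 1) = mat 1"
  by (simp add: cmat_def vec_eq_iff mat_def)
lemma cmat_zero: "cmat 0 = 0"
  by (simp add: cmat_def vec_eq_iff)
lemma cmat_icm: "cmat X ** icm Y = icm (X ** Y)"
  by (simp add: cmat_def icm_def matrix_matrix_mult_def vec_eq_iff sum_distrib_left mult_ac)
lemma icm_cmat: "icm X ** cmat Y = icm (X ** Y)"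
  by (simp add: cmat_def icm_def matrix_matrix_mult_def vec_eq_iff sum_distrib_left mult_ac)
lemma icm_icm: "icm X ** icm Y = - cmat (X ** Y)"
  by (simp add: cmat_def icm_def matrix_matrix_mult_def vec_eq_iff sum_distrib_left mult_ac sum_negf[symmetric])
lemma icm_cmat_eq:
  assumes "icm X + cmat Y = icm X' + cmat Y'"
  shows "X = X' \<and> Y = Y'"
proof -
  have "\<forall>i j. (icm X + cmat Y) $ i $ j = (icm X' + cmat Y') $ i $ j" using assms by simp
  then have "\<forall>i j. X $ i $ j = X' $ i $ j \<and> Y $ i $ j = Y' $ i $ j"
    by (auto simp: icm_def cmat_def complex_eq_iff)
  then show ?thesis by (simp add: vec_eq_iff)
qed

definition L :: "'n::finite smat \<Rightarrow> (complex^'m^'n) \<times> (complex^'m^'n) \<Rightarrow> (complex^'m^'n) \<times> (complex^'m^'n)" where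
  "L g p = (cmat (blkA g) ** fst p + cmat (blkB g) ** snd p, cmat (blkC g) ** fst p + cmat (blkD g) ** snd p)"

definition rmul :: "(complex^'m^'n) \<times> (complex^'m^'n) \<Rightarrow> complex^'k^'m \<Rightarrow> (complex^'k^'n) \<times> (complex^'k^'n)" where
  "rmul p M = (fst p ** M, snd p ** M)"

lemma L_mult: "L (g ** h) p = L g (L h p)"
  by (simp add: L_def blk_mult cmat_add cmat_mult matrix_add_ldistrib matrix_add_rdistrib matrix_mul_assoc add_ac)

lemma L_rmul: "L g (rmul p M) = rmul (L g p) M"
  by (simp add: L_def rmul_def matrix_add_rdistrib matrix_mul_assoc)

lemma L_id: "L (mat 1) p = p"
  by (simp add: L_def blk_mat1 cmat_mat1 cmat_zero prod_eq_iff)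

lemma rmul_rmul: "rmul (rmul p M) N = rmul p (M ** N)"
  by (simp add: rmul_def matrix_mul_assoc)

lemma rmul_id: "rmul p (mat 1) = p"
  by (simp add: rmul_def)

lemma sp_act_L: "sp_act g Z = fst (L g (Z, mat 1)) ** matrix_inv (snd (L g (Z, mat 1)))"
  by (simp add: sp_act_def L_def)

lemma matrix_inv_eq:
  fixes A :: "'a::semiring_1^'n^'n"
  assumes "A ** B = mat 1" "B ** A = mat 1"
  shows "matrix_inv A = B"
proof -
  have "\<exists>A'. A ** A' = mat 1 \<and> A' ** A = mat 1" using assms by blast
  then have h: "A ** matrix_inv A = mat 1 \<and> matrix_inv A ** A = mat 1"
    unfolding matrix_inv_def by (rule someI_ex)
  have "matrix_inv A = matrix_inv A ** (A ** B)" using assms by simp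
  also have "\<dots> = B" using h by (simp add: matrix_mul_assoc)
  finally show ?thesis .
qed

lemma matrix_inv_works:
  fixes A :: "'a::semiring_1^'n^'n"
  assumes "invertible A"
  shows "A ** matrix_inv A = mat 1" "matrix_inv A ** A = mat 1"
proof -
  have "\<exists>A'. A ** A' = mat 1 \<and> A' ** A = mat 1" using assms by (simp add: invertible_def)
  then have h: "A ** matrix_inv A = mat 1 \<and> matrix_inv A ** A = mat 1"
    unfolding matrix_inv_def by (rule someI_ex)
  then show "A ** matrix_inv A = mat 1" "matrix_inv A ** A = mat 1" by auto
qed

lemma Re_mv: "(\<chi> k. Re (((icm X + cmat D) *v v) $ k)) =
   D *v (\<chi> k. Re (v$k)) - X *v (\<chi> k. Im (v$k))"
  by (simp add: vec_eq_iff matrix_vector_mult_def icm_def cmat_def sum_subtractf[symmetric] algebra_simps)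

lemma Im_mv: "(\<chi> k. Im (((icm X + cmat D) *v v) $ k)) =
   X *v (\<chi> k. Re (v$k)) + D *v (\<chi> k. Im (v$k))"
  by (simp add: vec_eq_iff matrix_vector_mult_def icm_def cmat_def sum.distrib[symmetric] algebra_simps)

lemma inner_mv: "inner (x::real^'m) ((M::real^'n^'m) *v y) = inner (transpose M *v x) y"
  by (simp add: dot_lmul_matrix)



lemma pos_def_nonneg: "pos_def Y \<Longrightarrow> 0 \<le> x \<bullet> (Y *v x)"
  unfolding pos_def_def by (cases "x = 0") (auto intro: less_imp_le)

lemma inner_mv2: "inner ((M::real^'n^'m) *v y) (x::real^'m) = inner y (transpose M *v x)"
  by (metis inner_commute inner_mv)

lemma inner_tmv: "inner (x::real^'m) (transpose (M::real^'m^'n) *v y) = inner (M *v x) y"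
  using inner_mv[of x "transpose M" y] by simp

lemma inner_tmv2: "inner (transpose (M::real^'m^'n) *v y) (x::real^'m) = inner y (M *v x)"
  by (metis inner_commute inner_tmv)

lemma W_invertible:
  fixes g :: "'n::finite smat" and Y :: "real^'n^'n"
  assumes sg: "symplectic g" and pY: "pos_def Y"
  shows "invertible (cmat (blkC g) ** icm Y + cmat (blkD g))"
proof -
  define A where "A = blkA g"
  define B where "B = blkB g"
  define C where "C = blkC g"
  define D where "D = blkD g"
  have s1: "transpose A ** C = transpose C ** A"
    and s2: "transpose A ** D - transpose C ** B = mat 1"
    and s3: "transpose B ** D = transpose D ** B"
    using symplectic_blocks[OF sg] by (simp_all add: A_def B_def C_def D_def)
  have W: "cmat (blkC g) ** icm Y + cmat (blkD g) = icm (C ** Y) + cmat D"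
    by (simp add: cmat_icm C_def D_def)
  have ker: "v = 0" if hv: "(icm (C ** Y) + cmat D) *v v = 0" for v
  proof -
    define a where "a = (\<chi> k. Re (v$k))"
    define b where "b = (\<chi> k. Im (v$k))"
    have "(\<chi> k. Re (((icm (C ** Y) + cmat D) *v v) $ k)) = 0" using hv by (simp add: vec_eq_iff)
    then have "D *v a - (C ** Y) *v b = 0" unfolding Re_mv a_def b_def .
    then have e1: "D *v a = C *v (Y *v b)"
      by (simp add: matrix_vector_mul_assoc)
    have "(\<chi> k. Im (((icm (C ** Y) + cmat D) *v v) $ k)) = 0" using hv by (simp add: vec_eq_iff)
    then have "(C ** Y) *v a + D *v b = 0" unfolding Im_mv a_def b_def .
    then have e2: "D *v b = - (C *v (Y *v a))"
      by (simp add: matrix_vector_mul_assoc eq_neg_iff_add_eq_0 add.commute)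
    define u where "u = Y *v a"
    define w where "w = Y *v b"
    have au: "inner a u = inner (A *v u) (D *v a) - inner (C *v u) (B *v a)"
    proof -
      have "inner a u = inner u a" by (simp add: inner_commute)
      also have "\<dots> = inner u ((transpose A ** D - transpose C ** B) *v a)" using s2 by simp
      also have "\<dots> = inner (A *v u) (D *v a) - inner (C *v u) (B *v a)"
        by (simp del: transpose_matrix_vector add: matrix_vector_mult_diff_rdistrib inner_diff_right inner_tmv
            matrix_vector_mul_assoc[symmetric])
      finally show ?thesis .
    qed
    have bw: "inner b w = inner (A *v w) (D *v b) - inner (C *v w) (B *v b)"
    proof -
      have "inner b w = inner w b" by (simp add: inner_commute)
      also have "\<dots> = inner w ((transpose A ** D - transpose C ** B) *v b)" using s2 by simp
      also have "\<dots> = inner (A *v w) (D *v b) - inner (C *v w) (B *v b)"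
        by (simp del: transpose_matrix_vector add: matrix_vector_mult_diff_rdistrib inner_diff_right inner_tmv
            matrix_vector_mul_assoc[symmetric])
      finally show ?thesis .
    qed
    have x1: "inner (A *v u) (C *v w) = inner (A *v w) (C *v u)"
    proof -
      have "inner (A *v u) (C *v w) = inner ((transpose C ** A) *v u) w"
        by (simp del: transpose_matrix_vector add: inner_tmv2 matrix_vector_mul_assoc[symmetric])
      also have "\<dots> = inner ((transpose A ** C) *v u) w" using s1 by simp
      also have "\<dots> = inner (A *v w) (C *v u)"
        by (subst inner_commute) (simp del: transpose_matrix_vector add: inner_tmv matrix_vector_mul_assoc[symmetric])
      finally show ?thesis .
    qed
    have x2: "inner (B *v a) (D *v b) = inner (D *v a) (B *v b)"
    proof -
      have "inner (B *v a) (D *v b) = inner ((transpose D ** B) *v a) b"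
        by (simp del: transpose_matrix_vector add: inner_tmv2 matrix_vector_mul_assoc[symmetric])
      also have "\<dots> = inner ((transpose B ** D) *v a) b" using s3 by simp
      also have "\<dots> = inner (D *v a) (B *v b)"
        by (simp del: transpose_matrix_vector add: inner_tmv2 matrix_vector_mul_assoc[symmetric])
      finally show ?thesis .
    qed
    have sum0: "inner a u + inner b w = 0"
      using au bw x1 x2 e1 e2 unfolding u_def[symmetric] w_def[symmetric]
      by (simp add: inner_minus_left inner_minus_right inner_commute)
    have pa: "0 \<le> inner a u" "0 \<le> inner b w"
      using pos_def_nonneg[OF pY] by (simp_all add: u_def w_def)
    have "inner a u = 0" "inner b w = 0" using sum0 pa by linarith+
    then have "a = 0" "b = 0" using pY unfolding pos_def_def u_def w_def by force+
    then show "v = 0" by (simp add: a_def b_def vec_eq_iff complex_eq_iff)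
  qed
  have "\<exists>B'. B' ** (icm (C ** Y) + cmat D) = mat 1"
    using ker by (simp add: matrix_left_invertible_ker)
  then show ?thesis unfolding W by (simp add: invertible_left_inverse)
qed



lemma pos_def_int_lb:
  fixes Y :: "real^'n::finite^'n"
  assumes pY: "pos_def Y"
  shows "\<exists>c>0. \<forall>v. (\<forall>i. v$i \<in> \<int>) \<longrightarrow> v \<noteq> 0 \<longrightarrow> c \<le> v \<bullet> (Y *v v)"
proof -
  let ?S = "sphere (0::real^'n) 1"
  let ?f = "\<lambda>x. x \<bullet> (Y *v x)"
  have ne: "?S \<noteq> {}"
  proof -
    have "axis (undefined::'n) (1::real) \<in> ?S" by simp
    then show ?thesis by blast
  qed
  have ct: "continuous_on ?S ?f"
    by (intro continuous_intros)
  obtain x0 where x0: "x0 \<in> ?S" "\<And>y. y \<in> ?S \<Longrightarrow> ?f x0 \<le> ?f y"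
    using continuous_attains_inf[OF compact_sphere ne ct] by blast
  have "x0 \<noteq> 0" using x0(1) by auto
  then have c0: "?f x0 > 0" using pY by (simp add: pos_def_def)
  have "?f x0 \<le> ?f v" if vi: "\<forall>i. v$i \<in> \<int>" and v0: "v \<noteq> 0" for v
  proof -
    obtain i where "v$i \<noteq> 0" using v0 by (auto simp: vec_eq_iff)
    then have "1 \<le> \<bar>v$i\<bar>" using vi Ints_nonzero_abs_ge1 by blast
    also have "\<dots> \<le> norm v" by (rule component_le_norm_cart)
    finally have r1: "1 \<le> norm v" .
    define u where "u = (1 / norm v) *\<^sub>R v"
    have "u \<in> ?S" using v0 by (simp add: u_def)
    then have fu: "?f x0 \<le> ?f u" using x0 by blast
    have vu: "v = norm v *\<^sub>R u" using v0 by (simp add: u_def)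
    have "?f v = (norm v)^2 * ?f u"
      by (subst vu, subst vu) (simp add: matrix_vector_mult_scaleR power2_eq_square)
    moreover have "?f u \<le> (norm v)^2 * ?f u"
    proof -
      have "0 \<le> ?f u" using c0 fu by linarith
      moreover have "1 \<le> (norm v)^2" using r1 by (simp add: one_le_power)
      ultimately show ?thesis using mult_right_mono[of 1 "(norm v)^2" "?f u"] by simp
    qed
    ultimately show ?thesis using fu by linarith
  qed
  then show ?thesis using c0 by blast
qed

lemma congr_mult:
  assumes "x \<in> \<int>" "y' \<in> \<int>" "congr N x y" "congr N x' y'"
  shows "congr N (x * x') (y * y')"
proof -
  obtain k where k: "x - y = of_int (N * k)" using assms(3) by (auto simp: congr_def)
  obtain k' where k': "x' - y' = of_int (N * k')" using assms(4) by (auto simp: congr_def)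
  obtain a where a: "x = of_int a" using assms(1) Ints_cases by blast
  obtain b where b: "y' = of_int b" using assms(2) Ints_cases by blast
  have "x * x' - y * y' = x * (x' - y') + (x - y) * y'" by (simp add: algebra_simps)
  also have "\<dots> = of_int (N * (a * k' + k * b))" using k k' a b by (simp add: algebra_simps)
  finally show ?thesis unfolding congr_def by blast
qed

lemma congr_add: "congr N x y \<Longrightarrow> congr N x' y' \<Longrightarrow> congr N (x + x') (y + y')"
  unfolding congr_def
proof (elim exE)
  fix k k' assume "x - y = of_int (N * k)" "x' - y' = of_int (N * k')"
  then have "x + x' - (y + y') = of_int (N * (k + k'))" by (simp add: algebra_simps)
  then show "\<exists>k. x + x' - (y + y') = of_int (N * k)" by blast
qed

lemma congr_refl: "congr N x x"
  unfolding congr_def by (rule exI[of _ 0]) simp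

lemma congr_neg: "congr N x y \<Longrightarrow> congr N (- x) (- y)"
  unfolding congr_def
proof (elim exE)
  fix k assume "x - y = of_int (N * k)"
  then have "- x - (- y) = of_int (N * (- k))" by (simp add: algebra_simps)
  then show "\<exists>k. - x - (- y) = of_int (N * k)" by blast
qed

lemma congr_sum: "finite A \<Longrightarrow> (\<And>i. i \<in> A \<Longrightarrow> congr N (f i) (g i)) \<Longrightarrow> congr N (sum f A) (sum g A)"
  by (induction A rule: finite_induct) (auto intro: congr_add congr_refl)

lemma congr_dvd: "congr (N * M) x y \<Longrightarrow> congr N x y"
  unfolding congr_def
proof (elim exE)
  fix k assume "x - y = of_int (N * M * k)"
  then have "x - y = of_int (N * (M * k))" by (simp add: algebra_simps)
  then show "\<exists>k. x - y = of_int (N * k)" by blast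
qed

definition intv :: "real^'n \<Rightarrow> bool" where "intv v \<longleftrightarrow> (\<forall>i. v$i \<in> \<int>)"

lemma int_matrix_mult: "int_matrix A \<Longrightarrow> int_matrix B \<Longrightarrow> int_matrix (A ** B)"
  unfolding int_matrix_def matrix_matrix_mult_def by (auto intro!: Ints_sum Ints_mult)
lemma int_matrix_mv: "int_matrix A \<Longrightarrow> intv v \<Longrightarrow> intv (A *v v)"
  unfolding int_matrix_def intv_def matrix_vector_mult_def by (auto intro!: Ints_sum Ints_mult)
lemma int_matrix_transpose: "int_matrix A \<Longrightarrow> int_matrix (transpose A)"
  unfolding int_matrix_def transpose_def by auto
lemma int_matrix_neg: "int_matrix A \<Longrightarrow> int_matrix (- A)"
  unfolding int_matrix_def by auto
lemma int_matrix_mat1: "int_matrix (mat 1)"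
  unfolding int_matrix_def mat_def by auto
lemma int_matrix_J: "int_matrix Jmat"
  unfolding int_matrix_def Jmat_def blockmat_def mat_def by (auto split: sum.split)

lemma congr_mat_mult:
  assumes "int_matrix M1" "int_matrix P2" "congr_mat N M1 P1" "congr_mat N M2 P2"
  shows "congr_mat N (M1 ** M2) (P1 ** P2)"
  unfolding congr_mat_def matrix_matrix_mult_def
proof (intro allI)
  fix i j
  show "congr N ((\<chi> i j. \<Sum>k\<in>UNIV. M1 $ i $ k * M2 $ k $ j) $ i $ j) ((\<chi> i j. \<Sum>k\<in>UNIV. P1 $ i $ k * P2 $ k $ j) $ i $ j)"
    using assms unfolding congr_mat_def int_matrix_def
    by simp (rule congr_sum, simp, rule congr_mult, auto)
qed

lemma congr_mat_transpose: "congr_mat N M P \<Longrightarrow> congr_mat N (transpose M) (transpose P)"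
  unfolding congr_mat_def transpose_def by auto
lemma congr_mat_neg: "congr_mat N M P \<Longrightarrow> congr_mat N (- M) (- P)"
  unfolding congr_mat_def by (auto intro: congr_neg)
lemma congr_mat_refl: "congr_mat N M M"
  unfolding congr_mat_def by (auto intro: congr_refl)
lemma congr_mat_dvd: "congr_mat (N * M) x y \<Longrightarrow> congr_mat N x y"
  unfolding congr_mat_def by (auto intro: congr_dvd)



lemma core:
  fixes A B C D Y1 Y2 :: "real^'n::finite^'n"
  assumes pY1: "pos_def Y1" and pY2: "pos_def Y2"
    and iA: "int_matrix A" and iD: "int_matrix D"
    and cA: "congr_mat 2 A (mat 1)" and cD: "congr_mat 2 D (mat 1)"
    and s2: "transpose A ** D - transpose C ** B = mat 1"
    and eB: "B = - (Y1 ** C ** Y2)" and eA: "A ** Y2 = Y1 ** D"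
  shows "C = 0"
proof -
  have tY1: "transpose Y1 = Y1" and tY2: "transpose Y2 = Y2"
    using pY1 pY2 by (simp_all add: pos_def_def)
  define T where "T = mat 1 - transpose A ** D"
  have T1: "T = - (transpose C ** B)" unfolding T_def by (simp add: s2[symmetric])
  have T2: "T = transpose C ** Y1 ** C ** Y2"
    unfolding T1 eB by (simp add: matrix_neg_right matrix_mul_assoc)
  have T3: "mat 1 - T = transpose A ** D" unfolding T_def by simp
  have cAD: "congr_mat 2 (transpose A ** D) (mat 1)"
    using congr_mat_mult[OF int_matrix_transpose[OF iA] int_matrix_mat1 congr_mat_transpose[OF cA] cD]
    by simp
  define K where "K = (\<chi> i j. T $ i $ j / 2)"
  have iK: "int_matrix K"
    unfolding int_matrix_def
  proof (intro allI)
    fix i j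
    obtain k where "(transpose A ** D) $ i $ j - mat 1 $ i $ j = of_int (2 * k)"
      using cAD by (auto simp: congr_mat_def congr_def)
    then have "K $ i $ j = of_int (- k)" by (simp add: K_def T_def)
    then show "K $ i $ j \<in> \<int>" by simp
  qed
  have TK: "T *v x = 2 *\<^sub>R (K *v x)" for x
    by (simp add: K_def matrix_vector_mult_def vec_eq_iff sum_distrib_left)
  define bb where "bb x y = inner x (Y2 *v y)" for x y
  have symT: "transpose (Y2 ** T) = Y2 ** T"
    by (simp add: T2 matrix_transpose_mul tY1 tY2 matrix_mul_assoc)
  have SA: "bb x (T *v y) = bb (T *v x) y" for x y
  proof -
    have "bb x (T *v y) = inner x ((Y2 ** T) *v y)" by (simp add: bb_def matrix_vector_mul_assoc)
    also have "\<dots> = inner (transpose (Y2 ** T) *v x) y"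
      by (simp del: transpose_matrix_vector add: inner_mv)
    also have "\<dots> = inner (Y2 *v (T *v x)) y" by (simp add: symT matrix_vector_mul_assoc)
    also have "\<dots> = bb (T *v x) y"
      using inner_mv2[of Y2 "T *v x" y] by (simp del: transpose_matrix_vector add: bb_def tY2 inner_commute)
    finally show ?thesis .
  qed
  have F2: "bb x (T *v x) = inner (C *v (Y2 *v x)) (Y1 *v (C *v (Y2 *v x)))" for x
  proof -
    define z where "z = C *v (Y2 *v x)"
    have "bb x (T *v x) = inner x (Y2 *v (transpose C *v (Y1 *v z)))"
      by (simp del: transpose_matrix_vector add: bb_def T2 z_def matrix_vector_mul_assoc matrix_mul_assoc)
    also have "\<dots> = inner (Y2 *v x) (transpose C *v (Y1 *v z))"
      using inner_mv[of x Y2] tY2 by (simp del: transpose_matrix_vector)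
    also have "\<dots> = inner z (Y1 *v z)" by (simp del: transpose_matrix_vector add: inner_tmv z_def)
    finally show ?thesis unfolding z_def .
  qed
  have F2': "0 \<le> bb x (T *v x)" for x using F2 pos_def_nonneg[OF pY1] by simp
  have F3: "0 \<le> bb x ((mat 1 - T) *v x)" for x
  proof -
    have "bb x ((mat 1 - T) *v x) = inner x (Y2 *v (transpose A *v (D *v x)))"
      by (simp del: transpose_matrix_vector add: bb_def T3 matrix_vector_mul_assoc)
    also have "\<dots> = inner (Y2 *v x) (transpose A *v (D *v x))"
      using inner_mv[of x Y2] tY2 by (simp del: transpose_matrix_vector)
    also have "\<dots> = inner (A *v (Y2 *v x)) (D *v x)" by (simp del: transpose_matrix_vector add: inner_tmv)
    also have "\<dots> = inner (Y1 *v (D *v x)) (D *v x)" by (simp add: matrix_vector_mul_assoc eA)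
    also have "\<dots> = inner (D *v x) (Y1 *v (D *v x))" by (simp add: inner_commute)
    finally show ?thesis using pos_def_nonneg[OF pY1] by simp
  qed
  have F3': "bb x (T *v x) \<le> bb x x" for x
    using F3[of x] by (simp add: bb_def matrix_vector_mult_diff_rdistrib matrix_vector_mult_diff_distrib inner_diff_right)
  have F4: "bb (T *v x) (T *v x) \<le> bb x (T *v x)" for x
  proof -
    have a: "0 \<le> bb (x - T *v x) (T *v (x - T *v x))" by (rule F2')
    have b: "0 \<le> bb (T *v x) ((mat 1 - T) *v (T *v x))" by (rule F3)
    have c: "bb x (T *v (T *v x)) = bb (T *v x) (T *v x)" by (rule SA)
    show ?thesis using a b c
      by (simp add: bb_def matrix_vector_mult_diff_distrib matrix_vector_mult_diff_rdistrib
          inner_diff_left inner_diff_right)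
  qed
  have F5: "bb (K *v x) (K *v x) \<le> bb x x / 4" for x
  proof -
    have "bb (T *v x) (T *v x) = 4 * bb (K *v x) (K *v x)"
      by (simp add: TK bb_def matrix_vector_mult_scaleR)
    then show ?thesis using F4[of x] F3'[of x] by linarith
  qed
  have qpos: "x \<noteq> 0 \<Longrightarrow> 0 < bb x x" for x using pY2 by (simp add: bb_def pos_def_def)
  have qnn: "0 \<le> bb x x" for x using pos_def_nonneg[OF pY2] by (simp add: bb_def)
  have F8: "bb (((*v) K ^^ j) x) (((*v) K ^^ j) x) \<le> bb x x / 4^j" for j x
  proof (induction j)
    case 0 then show ?case by simp
  next
    case (Suc j)
    have "bb (((*v) K ^^ Suc j) x) (((*v) K ^^ Suc j) x) \<le> bb (((*v) K ^^ j) x) (((*v) K ^^ j) x) / 4"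
      using F5 by simp
    also have "\<dots> \<le> bb x x / 4^j / 4" using Suc by simp
    finally show ?case by (simp add: field_simps)
  qed
  have F7: "intv x \<Longrightarrow> intv (((*v) K ^^ j) x)" for j x
    by (induction j) (auto intro: int_matrix_mv[OF iK])
  obtain c where c0: "c > 0" and cb: "\<And>v. intv v \<Longrightarrow> v \<noteq> 0 \<Longrightarrow> c \<le> bb v v"
    using pos_def_int_lb[OF pY2] unfolding intv_def bb_def by blast
  have F9: "\<exists>j. ((*v) K ^^ j) x = 0" if ix: "intv x" for x
  proof (cases "x = 0")
    case True then show ?thesis by (intro exI[of _ 0]) simp
  next
    case False
    then have px: "0 < bb x x" by (rule qpos)
    obtain j where j: "(1/4::real)^j < c / bb x x"
      using real_arch_pow_inv[of "c / bb x x" "1/4"] c0 px by auto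
    then have "bb x x / 4^j < c" using px by (simp add: field_simps power_one_over)
    then have "((*v) K ^^ j) x = 0" using cb[OF F7[OF ix, of j]] F8[of j x] by fastforce
    then show ?thesis by blast
  qed
  have SAK: "bb x (K *v y) = bb (K *v x) y" for x y
    using SA[of x y] by (simp add: TK bb_def matrix_vector_mult_scaleR)
  have F10: "K *v y = 0" if "K *v (K *v y) = 0" for y
  proof -
    have "bb (K *v y) (K *v y) = 0" using SAK[of y "K *v y"] that by (simp add: bb_def)
    then show ?thesis using qpos by force
  qed
  have F11: "\<forall>y. ((*v) K ^^ Suc j) y = 0 \<longrightarrow> K *v y = 0" for j
  proof (induction j)
    case 0 then show ?case by simp
  next
    case (Suc j)
    show ?case
    proof (intro allI impI)
      fix y assume "((*v) K ^^ Suc (Suc j)) y = 0"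
      then have "((*v) K ^^ Suc j) (K *v y) = 0" by (simp only: funpow_Suc_right o_def)
      then have "K *v (K *v y) = 0" using Suc by blast
      then show "K *v y = 0" by (rule F10)
    qed
  qed
  have KI: "K *v x = 0" if ix: "intv x" for x
  proof -
    obtain j where j: "((*v) K ^^ j) x = 0" using F9[OF ix] by blast
    show ?thesis
    proof (cases j)
      case 0 then show ?thesis using j by simp
    next
      case (Suc j') then show ?thesis using F11[of j'] j by blast
    qed
  qed
  have K0: "K = 0"
  proof -
    have "K $ i $ k = 0" for i k
    proof -
      have "intv (axis k (1::real))" by (simp add: intv_def axis_def)
      then have "K *v axis k 1 = 0" by (rule KI)
      then show ?thesis by (simp add: matrix_vector_mult_basis column_def vec_eq_iff)
    qed
    then show ?thesis by (simp add: vec_eq_iff)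
  qed
  have CY: "C *v (Y2 *v x) = 0" for x
  proof -
    have "bb x (T *v x) = 0" by (simp add: TK K0 bb_def)
    then have "inner (C *v (Y2 *v x)) (Y1 *v (C *v (Y2 *v x))) = 0" using F2 by simp
    then show ?thesis using pY1 unfolding pos_def_def by force
  qed
  have "\<exists>B'. B' ** Y2 = mat 1"
    unfolding matrix_left_invertible_ker
  proof (intro allI impI)
    fix x assume "Y2 *v x = 0"
    then show "x = 0" using pY2 unfolding pos_def_def by force
  qed
  then obtain R where "R ** Y2 = mat 1" by blast
  then have R: "Y2 ** R = mat 1" using matrix_left_right_inverse by blast
  have "C *v y = 0 *v y" for y
    using CY[of "R *v y"] by (simp add: matrix_vector_mul_assoc R)
  then show "C = 0" using matrix_eq by blast
qed



lemma symplectic_mult: "symplectic g \<Longrightarrow> symplectic h \<Longrightarrow> symplectic (g ** h)"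
  unfolding symplectic_def
proof -
  assume a: "transpose g ** Jmat ** g = Jmat" "transpose h ** Jmat ** h = Jmat"
  have "transpose (g ** h) ** Jmat ** (g ** h) = transpose h ** (transpose g ** Jmat ** g) ** h"
    by (simp add: matrix_transpose_mul matrix_mul_assoc)
  then show "transpose (g ** h) ** Jmat ** (g ** h) = Jmat" using a by simp
qed

lemma symplectic_rinv:
  assumes "symplectic g" "g ** k = mat 1"
  shows "symplectic k"
proof -
  have "transpose k ** Jmat ** k = transpose k ** (transpose g ** Jmat ** g) ** k"
    using assms(1) by (simp add: symplectic_def)
  also have "\<dots> = transpose (g ** k) ** Jmat ** (g ** k)"
    by (simp add: matrix_transpose_mul matrix_mul_assoc)
  also have "\<dots> = Jmat" using assms(2) by simp
  finally show ?thesis by (simp add: symplectic_def)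
qed

lemma JJ: "(Jmat::'n::finite smat) ** Jmat = - mat 1"
  by (simp add: blk_eq blk_mult blk_J blk_uminus blk_mat1 matrix_neg_left matrix_neg_right)

definition spinv :: "'n::finite smat \<Rightarrow> 'n smat" where
  "spinv g = - (Jmat ** transpose g ** Jmat)"

lemma spinv_left: "symplectic g \<Longrightarrow> spinv g ** g = mat 1"
  unfolding spinv_def symplectic_def
  by (simp add: matrix_neg_left matrix_mul_assoc[symmetric] JJ)

lemma spinv_right: "symplectic g \<Longrightarrow> g ** spinv g = mat 1"
  using spinv_left matrix_left_right_inverse by blast

lemma int_spinv: "int_matrix g \<Longrightarrow> int_matrix (spinv g)"
  unfolding spinv_def
  by (intro int_matrix_neg int_matrix_mult int_matrix_J int_matrix_transpose)

lemma congr_spinv: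
  assumes "int_matrix g" "congr_mat N g (mat 1)"
  shows "congr_mat N (spinv g) (mat 1)"
proof -
  have a: "congr_mat N (Jmat ** transpose g) (Jmat ** mat 1)"
    by (rule congr_mat_mult[OF int_matrix_J int_matrix_mat1 congr_mat_refl congr_mat_transpose[OF assms(2), simplified]])
  have b: "congr_mat N ((Jmat ** transpose g) ** Jmat) ((Jmat ** mat 1) ** Jmat)"
    by (rule congr_mat_mult[OF int_matrix_mult[OF int_matrix_J int_matrix_transpose[OF assms(1)]] int_matrix_J a congr_mat_refl])
  show ?thesis using congr_mat_neg[OF b] by (simp add: spinv_def JJ)
qed

lemma congr_from_blocks:
  assumes "congr_mat N (blkA g) (mat 1)" "congr_mat N (blkB g) 0" "congr_mat N (blkC g) 0" "congr_mat N (blkD g) (mat 1)"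
  shows "congr_mat N g (mat 1)"
  unfolding congr_mat_def
proof (intro allI)
  fix i j :: "'a + 'a"
  show "congr N (g $ i $ j) (mat 1 $ i $ j)"
    using assms
    by (cases i; cases j) (auto simp: congr_mat_def blkA_def blkB_def blkC_def blkD_def mat_def)
qed

lemma congr_to_blocks:
  assumes "congr_mat N g (mat 1)"
  shows "congr_mat N (blkA g) (mat 1)" "congr_mat N (blkD g) (mat 1)"
proof -
  have a: "congr N (blkA g $ i $ j) (mat 1 $ i $ j)" for i j
    using assms[unfolded congr_mat_def, rule_format, of "Inl i" "Inl j"] by (simp add: blkA_def mat_def)
  have d: "congr N (blkD g $ i $ j) (mat 1 $ i $ j)" for i j
    using assms[unfolded congr_mat_def, rule_format, of "Inr i" "Inr j"] by (simp add: blkD_def mat_def)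
  show "congr_mat N (blkA g) (mat 1)" "congr_mat N (blkD g) (mat 1)"
    using a d by (auto simp: congr_mat_def)
qed

lemma int_blocks:
  assumes "int_matrix g"
  shows "int_matrix (blkA g)" "int_matrix (blkB g)" "int_matrix (blkC g)" "int_matrix (blkD g)"
  using assms by (auto simp: int_matrix_def blkA_def blkB_def blkC_def blkD_def)

lemma Gamma_2m_2_props:
  assumes "g \<in> Gamma_2m_2 m"
  shows "symplectic g" "int_matrix g" "congr_mat 2 g (mat 1)"
proof -
  show "symplectic g" "int_matrix g" using assms by (auto simp: Gamma_2m_2_def Sp_Z_def)
  have "congr_mat (2 * int m) (blkB g) 0" "congr_mat (2 * int m) (blkC g) 0"
    using assms by (auto simp: Gamma_2m_2_def)
  then have "congr_mat 2 (blkB g) 0" "congr_mat 2 (blkC g) 0" by (auto intro: congr_mat_dvd)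
  then show "congr_mat 2 g (mat 1)"
    using assms by (intro congr_from_blocks) (auto simp: Gamma_2m_2_def)
qed



lemma snd_L_icm: "snd (L g (icm Y, mat 1)) = cmat (blkC g) ** icm Y + cmat (blkD g)"
  by (simp add: L_def)

theorem lemma4p10:
  fixes m :: nat and g1 g2 \<gamma> :: "'n::finite smat" and Z1 Z2 :: "complex^'n^'n"
  assumes "m \<ge> 1"
    and "g1 \<in> Gamma_2m_2 m" and "g2 \<in> Gamma_2m_2 m"
    and "Z1 \<in> sp_act g1 ` iCn" and "Z2 \<in> sp_act g2 ` iCn"
    and "\<gamma> \<in> Gamma_princ (4 * m)"
    and "sp_act \<gamma> Z1 = Z2"
  shows "\<exists>\<alpha> \<in> Gamma_l_2. g2 = \<gamma> ** g1 ** embed_GL \<alpha>"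
proof -
  note g1 = Gamma_2m_2_props[OF assms(2)]
  note g2 = Gamma_2m_2_props[OF assms(3)]
  have sgm: "symplectic \<gamma>" and igm: "int_matrix \<gamma>" and cgm4: "congr_mat (int (4 * m)) \<gamma> (mat 1)"
    using assms(6) by (auto simp: Gamma_princ_def Sp_Z_def)
  have cgm: "congr_mat 2 \<gamma> (mat 1)"
    using cgm4 congr_mat_dvd[of 2 "2 * int m"] by (simp add: mult.assoc)
  obtain Y1 where pY1: "pos_def Y1" and Z1: "Z1 = sp_act g1 (icm Y1)"
    using assms(4) by (auto simp: iCn_def Cn_def icm_def)
  obtain Y2 where pY2: "pos_def Y2" and Z2: "Z2 = sp_act g2 (icm Y2)"
    using assms(5) by (auto simp: iCn_def Cn_def icm_def)
  define g' where "g' = \<gamma> ** g1"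
  have sg': "symplectic g'" unfolding g'_def using sgm g1(1) by (rule symplectic_mult)
  have ig': "int_matrix g'" unfolding g'_def using igm g1(2) by (rule int_matrix_mult)
  have cg': "congr_mat 2 g' (mat 1)"
    unfolding g'_def using congr_mat_mult[OF igm int_matrix_mat1 cgm g1(3)] by simp
  define S1 where "S1 = (icm Y1, mat 1 :: complex^'n^'n)"
  define S2 where "S2 = (icm Y2, mat 1 :: complex^'n^'n)"
  define W1 where "W1 = snd (L g1 S1)"
  define W' where "W' = snd (L g' S1)"
  define W2 where "W2 = snd (L g2 S2)"
  have invW1: "invertible W1" unfolding W1_def S1_def snd_L_icm by (rule W_invertible[OF g1(1) pY1])
  have invW': "invertible W'" unfolding W'_def S1_def snd_L_icm by (rule W_invertible[OF sg' pY1])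
  have invW2: "invertible W2" unfolding W2_def S2_def snd_L_icm by (rule W_invertible[OF g2(1) pY2])
  note W1i = matrix_inv_works[OF invW1]
  note W'i = matrix_inv_works[OF invW']
  note W2i = matrix_inv_works[OF invW2]
  have Z1e: "(Z1, mat 1) = rmul (L g1 S1) (matrix_inv W1)"
  proof -
    have "Z1 = fst (L g1 S1) ** matrix_inv W1" unfolding Z1 sp_act_L S1_def W1_def ..
    then show ?thesis using W1i unfolding rmul_def W1_def by simp
  qed
  have LgZ1: "L \<gamma> (Z1, mat 1) = rmul (L g' S1) (matrix_inv W1)"
    unfolding Z1e L_rmul g'_def L_mult ..
  have inv2: "matrix_inv (W' ** matrix_inv W1) = W1 ** matrix_inv W'"
  proof (rule matrix_inv_eq)
    show "W' ** matrix_inv W1 ** (W1 ** matrix_inv W') = mat 1"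
      by (metis W1i(2) W'i(1) matrix_mul_assoc matrix_mul_rid)
    show "W1 ** matrix_inv W' ** (W' ** matrix_inv W1) = mat 1"
      by (metis W1i(1) W'i(2) matrix_mul_assoc matrix_mul_rid)
  qed
  have Z2a: "Z2 = fst (L g' S1) ** matrix_inv W'"
  proof -
    have "Z2 = sp_act \<gamma> Z1" using assms(7) by simp
    also have "\<dots> = (fst (L g' S1) ** matrix_inv W1) ** (W1 ** matrix_inv W')"
      unfolding sp_act_L LgZ1 by (simp add: rmul_def W'_def[symmetric] inv2)
    also have "\<dots> = fst (L g' S1) ** matrix_inv W'"
      by (metis W1i(2) matrix_mul_assoc matrix_mul_lid)
    finally show ?thesis .
  qed
  have Z2e: "(Z2, mat 1) = rmul (L g' S1) (matrix_inv W')"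
    unfolding rmul_def Z2a using W'i by (simp add: W'_def)
  have L2: "L g2 S2 = rmul (Z2, mat 1) W2"
  proof -
    have "Z2 = fst (L g2 S2) ** matrix_inv W2" unfolding Z2 sp_act_L S2_def W2_def ..
    then have "Z2 ** W2 = fst (L g2 S2)" using W2i by (metis matrix_mul_assoc matrix_mul_rid)
    then show ?thesis by (simp add: rmul_def W2_def prod_eq_iff)
  qed
  define h where "h = spinv g' ** g2"
  define M where "M = matrix_inv W' ** W2"
  have Lh: "L h S2 = (icm Y1 ** M, M)"
  proof -
    have "L h S2 = L (spinv g') (rmul (rmul (L g' S1) (matrix_inv W')) W2)"
      unfolding h_def L_mult L2 Z2e ..
    also have "\<dots> = rmul S1 M"
      unfolding L_rmul L_mult[symmetric] spinv_left[OF sg'] L_id rmul_rmul M_def ..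
    finally show ?thesis by (simp add: rmul_def S1_def)
  qed
  define A where "A = blkA h"
  define B where "B = blkB h"
  define C where "C = blkC h"
  define D where "D = blkD h"
  have fstLh: "fst (L h S2) = icm (A ** Y2) + cmat B"
    by (simp add: L_def S2_def cmat_icm A_def B_def)
  have sndLh: "snd (L h S2) = icm (C ** Y2) + cmat D"
    by (simp add: L_def S2_def cmat_icm C_def D_def)
  have "icm (A ** Y2) + cmat B = icm Y1 ** (icm (C ** Y2) + cmat D)"
    using Lh fstLh sndLh by (metis fst_conv snd_conv)
  also have "\<dots> = icm (Y1 ** D) + cmat (- (Y1 ** C ** Y2))"
    by (simp add: matrix_add_ldistrib icm_icm icm_cmat cmat_neg matrix_mul_assoc add.commute)
  finally have "A ** Y2 = Y1 ** D \<and> B = - (Y1 ** C ** Y2)" by (rule icm_cmat_eq)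
  then have eA: "A ** Y2 = Y1 ** D" and eB: "B = - (Y1 ** C ** Y2)" by auto
  have sh: "symplectic h" unfolding h_def
    by (rule symplectic_mult[OF symplectic_rinv[OF sg' spinv_right[OF sg']] g2(1)])
  have ih: "int_matrix h" unfolding h_def by (rule int_matrix_mult[OF int_spinv[OF ig'] g2(2)])
  have ch: "congr_mat 2 h (mat 1)"
    unfolding h_def using congr_mat_mult[OF int_spinv[OF ig'] int_matrix_mat1 congr_spinv[OF ig' cg'] g2(3)]
    by simp
  note sb = symplectic_blocks[OF sh, folded A_def B_def C_def D_def]
  have C0: "C = 0"
    by (rule core[OF pY1 pY2 _ _ _ _ sb(2) eB eA])
      (simp_all add: A_def D_def int_blocks[OF ih] congr_to_blocks[OF ch])
  have B0: "B = 0" using eB C0 by simp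
  have AD: "transpose A ** D = mat 1" using sb(2) C0 by (simp add: transpose_zero)
  have DA: "transpose D ** A = mat 1"
    using arg_cong[OF AD, of transpose] by (simp add: matrix_transpose_mul)
  have ADt: "A ** transpose D = mat 1" using DA matrix_left_right_inverse by blast
  have iA: "int_matrix A" and iD: "int_matrix D" using int_blocks[OF ih] by (simp_all add: A_def D_def)
  have alpha: "A \<in> Gamma_l_2"
    unfolding Gamma_l_2_def GL_Z_def
    using iA int_matrix_transpose[OF iD] ADt DA congr_to_blocks[OF ch] by (auto simp: A_def)
  have minv: "matrix_inv A = transpose D" by (rule matrix_inv_eq[OF ADt DA])
  have emb: "embed_GL A = h"
    unfolding embed_GL_def minv transpose_transpose
    by (metis A_def B0 B_def C0 C_def D_def blockmat_blk)
  have "\<gamma> ** g1 ** embed_GL A = g' ** (spinv g' ** g2)" by (simp add: emb g'_def h_def)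
  also have "\<dots> = g2" by (simp add: matrix_mul_assoc spinv_right[OF sg'])
  finally show ?thesis using alpha by metis
qed

end
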